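(* Let $v \sim \mathcal{N}(0, I_d)$ and $\alpha > 0$. Then for any $p \ge 1$ and any fixed unit vector $s \in \mathbb{S}^{d-1}$, $$\mathbb{E}[\|v\|^p \mid |\langle v, s\rangle| \ge \alpha]^{1/p} \le 2\alpha + (2p)^{1/2} + (d+p-1)^{1/2}.$$
   Context: $\|\cdot\|$ is the Euclidean norm and $\langle\cdot,\cdot\rangle$ the standard inner product on $\mathbb{R}^d$. *)

theory Defs
  imports "HOL-Probability.Probability"
begin

definition std_gaussian :: "'a::euclidean_space measure" where
  "std_gaussian = density lborel
     (\<lambda>x. ennreal ((2 * pi) powr (- real DIM('a) / 2) * exp (- (norm x)\<^sup>2 / 2)))"

definition cond_exp_event :: "'a measure \<Rightarrow> ('a \<Rightarrow> real) \<Rightarrow> 'a set \<Rightarrow> real" where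
  "cond_exp_event M f A = (\<integral>x. indicator A x * f x \<partial>M) / measure M A"

end

theory Submission
  imports Defs
begin


lemma meas_comp:
  fixes H :: "real \<Rightarrow> 'a::euclidean_space \<Rightarrow> ennreal"
  assumes H: "case_prod H \<in> borel_measurable (lborel \<Otimes>\<^sub>M lborel)"
  and F: "(\<lambda>(t,v). F t v) \<in> borel_measurable (lborel \<Otimes>\<^sub>M lborel)"
  and G: "(\<lambda>(t,v). G t v) \<in> borel_measurable (lborel \<Otimes>\<^sub>M lborel)"
  shows "(\<lambda>(t,v). H (F t v) (G t v)) \<in> borel_measurable (lborel \<Otimes>\<^sub>M lborel)"
proof -
  have "(\<lambda>x. (case_prod F x, case_prod G x)) \<in> measurable (lborel \<Otimes>\<^sub>M lborel) (lborel \<Otimes>\<^sub>M lborel)"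
    using F G by (intro measurable_Pair) (auto simp: measurable_lborel2)
  from measurable_compose[OF this H] show ?thesis by (simp add: case_prod_beta')
qed

lemma transl:
  fixes f :: "'a::euclidean_space \<Rightarrow> ennreal"
  assumes "f \<in> borel_measurable borel"
  shows "(\<integral>\<^sup>+v. f (v + c) \<partial>lborel) = (\<integral>\<^sup>+v. f v \<partial>lborel)"
proof -
  have "(\<integral>\<^sup>+v. f v \<partial>lborel) = (\<integral>\<^sup>+v. f v \<partial>distr lborel borel ((+) c))"
    by (simp add: lborel_distr_plus)
  also have "\<dots> = (\<integral>\<^sup>+v. f (c + v) \<partial>lborel)"
    using assms by (subst nn_integral_distr) auto
  finally show ?thesis by (simp add: add.commute)
qed

lemma swap:
  fixes H :: "real \<Rightarrow> 'a::euclidean_space \<Rightarrow> ennreal" and s :: 'a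
  assumes H[measurable]: "case_prod H \<in> borel_measurable (lborel \<Otimes>\<^sub>M lborel)" and s: "norm s = 1"
  shows "(\<integral>\<^sup>+t. \<integral>\<^sup>+v. H t v \<partial>lborel \<partial>lborel)
       = (\<integral>\<^sup>+t. \<integral>\<^sup>+v. H (v \<bullet> s) (v + (t - v \<bullet> s) *\<^sub>R s) \<partial>lborel \<partial>lborel)"
proof -
  define H1 where "H1 t v = H (-t) v" for t v
  define H2 where "H2 t v = H1 t (v + t *\<^sub>R s)" for t v
  define H3 where "H3 t v = H2 (t - v \<bullet> s) v" for t v
  have m1[measurable]: "case_prod H1 \<in> borel_measurable (lborel \<Otimes>\<^sub>M lborel)"
    unfolding H1_def by (rule meas_comp[OF H]) measurable
  have m2[measurable]: "case_prod H2 \<in> borel_measurable (lborel \<Otimes>\<^sub>M lborel)"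
    unfolding H2_def by (rule meas_comp[OF m1]) measurable
  have m3[measurable]: "case_prod H3 \<in> borel_measurable (lborel \<Otimes>\<^sub>M lborel)"
    unfolding H3_def by (rule meas_comp[OF m2]) measurable
  have inner: "\<And>f. case_prod f \<in> borel_measurable (lborel \<Otimes>\<^sub>M lborel) \<Longrightarrow>
      (\<lambda>t. \<integral>\<^sup>+v. f t v \<partial>(lborel::'a measure)) \<in> borel_measurable (lborel::real measure)"
    by (rule lborel.borel_measurable_nn_integral)
  have sec: "\<And>(f :: real \<Rightarrow> 'a \<Rightarrow> ennreal) t. case_prod f \<in> borel_measurable (lborel \<Otimes>\<^sub>M lborel) \<Longrightarrow>
      (f t :: 'a \<Rightarrow> ennreal) \<in> borel_measurable borel"
  proof -
    fix f :: "real \<Rightarrow> 'a \<Rightarrow> ennreal" and t :: real assume a: "case_prod f \<in> borel_measurable (lborel \<Otimes>\<^sub>M lborel)"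
    have "(\<lambda>y. case_prod f (t, y)) \<in> borel_measurable lborel"
      by (rule measurable_Pair2[OF a]) simp
    then show "(f t :: 'a \<Rightarrow> ennreal) \<in> borel_measurable borel" by (simp add: measurable_lborel1)
  qed
  have sec1: "\<And>(f :: real \<Rightarrow> 'a \<Rightarrow> ennreal) v. case_prod f \<in> borel_measurable (lborel \<Otimes>\<^sub>M lborel) \<Longrightarrow>
      (\<lambda>t::real. f t (v::'a) :: ennreal) \<in> borel_measurable borel"
  proof -
    fix f :: "real \<Rightarrow> 'a \<Rightarrow> ennreal" and v :: 'a assume a: "case_prod f \<in> borel_measurable (lborel \<Otimes>\<^sub>M lborel)"
    have "(\<lambda>y. case_prod f (y, v)) \<in> borel_measurable lborel"
      by (rule measurable_Pair1[OF a]) simp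
    then show "(\<lambda>t::real. f t v :: ennreal) \<in> borel_measurable borel" by (simp add: measurable_lborel1)
  qed
  have "(\<integral>\<^sup>+t. \<integral>\<^sup>+v. H t v \<partial>lborel \<partial>lborel) = (\<integral>\<^sup>+t. \<integral>\<^sup>+v. H1 t v \<partial>lborel \<partial>lborel)"
    unfolding H1_def using inner[OF H]
    by (subst nn_integral_real_affine[where c="-1" and t=0]) (auto simp: measurable_lborel1[symmetric])
  also have "\<dots> = (\<integral>\<^sup>+t. \<integral>\<^sup>+v. H2 t v \<partial>lborel \<partial>lborel)"
    unfolding H2_def by (intro nn_integral_cong transl[symmetric] sec[OF m1])
  also have "\<dots> = (\<integral>\<^sup>+v. \<integral>\<^sup>+t. H2 t v \<partial>lborel \<partial>lborel)"
    by (rule lborel_pair.Fubini'[symmetric]) (rule m2)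
  also have "\<dots> = (\<integral>\<^sup>+v. \<integral>\<^sup>+t. H3 t v \<partial>lborel \<partial>lborel)"
    unfolding H3_def
  proof (rule nn_integral_cong)
    fix v :: 'a
    show "(\<integral>\<^sup>+t. H2 t v \<partial>lborel) = (\<integral>\<^sup>+t. H2 (t - v \<bullet> s) v \<partial>lborel)"
      using sec1[OF m2, of v]
      by (subst nn_integral_real_affine[where c=1 and t="- (v \<bullet> s)"]) auto
  qed
  also have "\<dots> = (\<integral>\<^sup>+t. \<integral>\<^sup>+v. H3 t v \<partial>lborel \<partial>lborel)"
    by (rule lborel_pair.Fubini') (rule m3)
  also have "\<dots> = (\<integral>\<^sup>+t. \<integral>\<^sup>+v. H3 t (v + t *\<^sub>R s) \<partial>lborel \<partial>lborel)"
    by (intro nn_integral_cong transl[symmetric] sec[OF m3])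
  also have "\<dots> = (\<integral>\<^sup>+t. \<integral>\<^sup>+v. H (v \<bullet> s) (v + (t - v \<bullet> s) *\<^sub>R s) \<partial>lborel \<partial>lborel)"
  proof (intro nn_integral_cong)
    fix t v
    have ss: "s \<bullet> s = 1" using s by (simp add: norm_eq_sqrt_inner)
    show "H3 t (v + t *\<^sub>R s) = H (v \<bullet> s) (v + (t - v \<bullet> s) *\<^sub>R s)"
      unfolding H3_def H2_def H1_def using ss
      by (simp add: inner_add_left algebra_simps)
  qed
  finally show ?thesis .
qed

lemma norm_shift:
  fixes v s :: "'a::euclidean_space"
  assumes s: "norm s = 1"
  shows "(norm (v + (t - v \<bullet> s) *\<^sub>R s))\<^sup>2 = (norm v)\<^sup>2 - (v \<bullet> s)\<^sup>2 + t\<^sup>2"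
proof -
  have ss: "s \<bullet> s = 1" using s by (simp add: norm_eq_sqrt_inner)
  show ?thesis
    unfolding power2_norm_eq_inner
    by (simp add: inner_add_left inner_add_right ss inner_commute
        power2_eq_square algebra_simps)
qed

lemma gswap:
  fixes s :: "'a::euclidean_space" and h :: "'a \<Rightarrow> ennreal"
  assumes s: "norm s = 1" and h[measurable]: "h \<in> borel_measurable borel"
  shows "(\<integral>\<^sup>+t. ennreal (exp (- t\<^sup>2 / 2)) \<partial>lborel) * (\<integral>\<^sup>+v. ennreal (exp (- (norm v)\<^sup>2 / 2)) * h v \<partial>lborel)
    = (\<integral>\<^sup>+t. \<integral>\<^sup>+v. ennreal (exp (- t\<^sup>2 / 2) * exp (- (norm v)\<^sup>2 / 2)) * h (v + (t - v \<bullet> s) *\<^sub>R s) \<partial>lborel \<partial>lborel)"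
proof -
  define H where "H t v = ennreal (exp (- t\<^sup>2 / 2) * exp (- (norm v)\<^sup>2 / 2)) * h v" for t :: real and v :: 'a
  have Hm: "case_prod H \<in> borel_measurable (lborel \<Otimes>\<^sub>M lborel)"
    unfolding H_def by measurable
  have "(\<integral>\<^sup>+t. ennreal (exp (- t\<^sup>2 / 2)) \<partial>lborel) * (\<integral>\<^sup>+v. ennreal (exp (- (norm v)\<^sup>2 / 2)) * h v \<partial>lborel)
      = (\<integral>\<^sup>+t. ennreal (exp (- t\<^sup>2 / 2)) * (\<integral>\<^sup>+v. ennreal (exp (- (norm v)\<^sup>2 / 2)) * h v \<partial>lborel) \<partial>lborel)"
    by (rule nn_integral_multc[symmetric]) measurable
  also have "\<dots> = (\<integral>\<^sup>+t. \<integral>\<^sup>+v. H t v \<partial>lborel \<partial>lborel)"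
    unfolding H_def
    by (intro nn_integral_cong) (simp add: nn_integral_cmult[symmetric] ennreal_mult mult.assoc)
  also have "\<dots> = (\<integral>\<^sup>+t. \<integral>\<^sup>+v. H (v \<bullet> s) (v + (t - v \<bullet> s) *\<^sub>R s) \<partial>lborel \<partial>lborel)"
    by (rule swap[OF Hm s])
  also have "\<dots> = (\<integral>\<^sup>+t. \<integral>\<^sup>+v. ennreal (exp (- t\<^sup>2 / 2) * exp (- (norm v)\<^sup>2 / 2)) * h (v + (t - v \<bullet> s) *\<^sub>R s) \<partial>lborel \<partial>lborel)"
  proof (intro nn_integral_cong)
    fix t v
    have "exp (- (v \<bullet> s)\<^sup>2 / 2) * exp (- (norm (v + (t - v \<bullet> s) *\<^sub>R s))\<^sup>2 / 2)
        = exp (- t\<^sup>2 / 2) * exp (- (norm v)\<^sup>2 / 2)"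
      unfolding norm_shift[OF s] mult_exp_exp by (simp add: field_simps)
    then show "H (v \<bullet> s) (v + (t - v \<bullet> s) *\<^sub>R s) = ennreal (exp (- t\<^sup>2 / 2) * exp (- (norm v)\<^sup>2 / 2)) * h (v + (t - v \<bullet> s) *\<^sub>R s)"
      unfolding H_def by simp
  qed
  finally show ?thesis .
qed



lemma mink:
  fixes a b u w p :: real
  assumes a: "a > 0" and b: "b > 0" and u: "u \<ge> 0" and w: "w \<ge> 0" and p: "p \<ge> 1"
  shows "(u + w) powr p \<le> (a + b) powr (p - 1) * (u powr p / a powr (p - 1) + w powr p / b powr (p - 1))"
proof -
  define S where "S = a + b"
  have S: "S > 0" "a \<le> S" "b \<le> S" using a b by (auto simp: S_def)
  have Sa: "S powr (p-1) = S powr p / S" and aa: "a powr (p-1) = a powr p / a" and bb: "b powr (p-1) = b powr p / b"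
    using S a b by (simp_all add: powr_diff)
  have pa: "S powr p > 0" "a powr p > 0" "b powr p > 0" using S a b by auto
  consider "u = 0" | "w = 0" | "u > 0" "w > 0" using u w by linarith
  then show ?thesis
  proof cases
    case 1
    have "b powr (p-1) \<le> S powr (p-1)" using S b p by (intro powr_mono2) auto
    then have "1 \<le> S powr (p-1) / b powr (p-1)" using b by simp
    then have "w powr p * 1 \<le> w powr p * (S powr (p-1) / b powr (p-1))" by (intro mult_left_mono) auto
    then show ?thesis using 1 p by (simp add: S_def mult.commute)
  next
    case 2
    have "a powr (p-1) \<le> S powr (p-1)" using S a p by (intro powr_mono2) auto
    then have "1 \<le> S powr (p-1) / a powr (p-1)" using a by simp
    then have "u powr p * 1 \<le> u powr p * (S powr (p-1) / a powr (p-1))" by (intro mult_left_mono) auto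
    then show ?thesis using 2 p by (simp add: S_def mult.commute)
  next
    case 3
    have cv: "convex_on {0<..} (\<lambda>x::real. x powr p)" by (rule powr_convex[OF p])
    define t where "t = b / S"
    have t: "0 \<le> t" "t \<le> 1" using S b by (auto simp: t_def)
    have x: "u * S / a \<in> {0<..}" and y: "w * S / b \<in> {0<..}" using 3 S a b by auto
    from convex_onD[OF cv t x y]
    have cvx: "((1 - t) *\<^sub>R (u * S / a) + t *\<^sub>R (w * S / b)) powr p
       \<le> (1 - t) * (u * S / a) powr p + t * (w * S / b) powr p" .
    have omt: "1 - t = a / S" using S by (simp add: t_def S_def field_simps)
    have "(1 - t) *\<^sub>R (u * S / a) + t *\<^sub>R (w * S / b) = u + w"
      using S a b unfolding omt by (simp add: t_def)
    moreover have "(1 - t) * (u * S / a) powr p = S powr (p-1) * (u powr p / a powr (p-1))"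
      using S a b 3 by (simp add: t_def powr_divide powr_mult Sa aa) (simp add: S_def field_simps)
    moreover have "t * (w * S / b) powr p = S powr (p-1) * (w powr p / b powr (p-1))"
      using S a b 3 by (simp add: t_def powr_divide powr_mult Sa bb)
    ultimately show ?thesis using cvx by (simp add: S_def distrib_left)
  qed
qed

lemma expbound:
  fixes z q \<mu> :: real
  assumes z: "z \<ge> 0" and q: "q > 0" and mu: "\<mu> > 0"
  shows "z powr q \<le> (q / (\<mu> * exp 1)) powr q * exp (\<mu> * z)"
proof (cases "z = 0")
  case True then show ?thesis using q by simp
next
  case False
  then have zp: "z > 0" using z by simp
  have "ln (\<mu> * z / q) \<le> \<mu> * z / q - 1" using zp q mu by (intro ln_le_minus_one) auto
  then have "ln \<mu> + ln z - ln q \<le> \<mu> * z / q - 1" using zp q mu by (simp add: ln_div ln_mult)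
  then have "q * ln z \<le> q * (ln q - ln \<mu> - 1) + \<mu> * z" using q by (simp add: field_simps)
  then have "exp (q * ln z) \<le> exp (q * (ln q - ln \<mu> - 1) + \<mu> * z)" by simp
  moreover have "exp (q * ln z) = z powr q" using zp by (simp add: powr_def)
  moreover have "exp (q * (ln q - ln \<mu> - 1) + \<mu> * z) = (q / (\<mu> * exp 1)) powr q * exp (\<mu> * z)"
    using q mu by (simp add: powr_def ln_div ln_mult mult_exp_exp algebra_simps)
  ultimately show ?thesis by simp
qed



lemma sqrt_powr:
  fixes x p :: real assumes "x \<ge> 0"
  shows "sqrt x powr p = x powr (p / 2)"
  using assms by (simp add: powr_half_sqrt[symmetric] powr_powr)

lemma const1:
  fixes p :: real assumes p: "p \<ge> 1"
  shows "(p / 2 / (1 / 4 * exp 1)) powr (p / 2) * sqrt 2 \<le> sqrt (2 * p) powr p"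
proof -
  have "(p / 2 / (1 / 4 * exp 1)) = (2 * p) / exp 1" by simp
  then have "(p / 2 / (1 / 4 * exp 1)) powr (p / 2) = (2 * p) powr (p/2) / exp (p / 2)"
    using p by (simp add: powr_def ln_div exp_diff[symmetric] algebra_simps)
  moreover have "sqrt (2 * p) powr p = (2 * p) powr (p / 2)"
    using p by (simp add: sqrt_powr)
  moreover have "sqrt 2 \<le> exp (p / 2)"
  proof -
    have "sqrt 2 \<le> 3/2" by (rule real_le_lsqrt) (auto simp: power2_eq_square)
    also have "3/2 \<le> 1 + p/2" using p by simp
    also have "\<dots> \<le> exp (p/2)" by (rule exp_ge_add_one_self)
    finally show ?thesis .
  qed
  ultimately show ?thesis
  proof -
    assume e1: "(p / 2 / (1 / 4 * exp 1)) powr (p / 2) = (2 * p) powr (p/2) / exp (p / 2)"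
      and e2: "sqrt (2 * p) powr p = (2 * p) powr (p / 2)" and e3: "sqrt 2 \<le> exp (p / 2)"
    have "(2 * p) powr (p/2) / exp (p / 2) * sqrt 2 \<le> (2 * p) powr (p/2) / exp (p / 2) * exp (p/2)"
      using e3 by (intro mult_left_mono) auto
    then show ?thesis unfolding e1 e2 by simp
  qed
qed

lemma const2:
  fixes p :: real and D :: nat
  assumes p: "p \<ge> 1" and D: "D \<ge> 1"
  defines "d \<equiv> real D"
  defines "\<mu> \<equiv> p / (2 * (d + p))"
  defines "c \<equiv> sqrt (1 - 2 * \<mu>)"
  shows "(p / 2 / (\<mu> * exp 1)) powr (p / 2) * (c / c ^ D) \<le> sqrt (d + p - 1) powr p"
proof -
  have d1: "d \<ge> 1" using D by (simp add: d_def)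
  have mu: "\<mu> > 0" using p d1 by (simp add: \<mu>_def)
  have omu: "1 - 2 * \<mu> = d / (d + p)" using p d1 by (simp add: \<mu>_def field_simps)
  have cpos: "c > 0" using omu d1 p by (simp add: c_def)
  have lnc: "ln c = (ln d - ln (d + p)) / 2"
    using omu d1 p by (simp add: c_def ln_sqrt ln_div)
  have h1: "p / 2 / (\<mu> * exp 1) = (d + p) / exp 1" using p d1 by (simp add: \<mu>_def field_simps)
  have "ln ((p / 2 / (\<mu> * exp 1)) powr (p / 2) * (c / c ^ D))
      = (p/2) * (ln (d + p) - 1) + (d - 1) / 2 * (ln (d + p) - ln d)"
    using cpos d1 p unfolding h1
    by (simp add: ln_mult ln_div ln_powr ln_realpow lnc d_def algebra_simps) (simp add: field_simps)
  also have "\<dots> \<le> (p / 2) * ln (d + p - 1)"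
  proof -
    have a1: "ln (d + p) - ln d \<le> p / d"
    proof -
      have "ln ((d + p) / d) \<le> (d + p) / d - 1" using d1 p by (intro ln_le_minus_one) auto
      then show ?thesis using d1 p by (simp add: ln_div field_simps)
    qed
    have a2: "ln (d + p) - ln (d + p - 1) \<le> 1 / d"
    proof -
      have "ln ((d + p) / (d + p - 1)) \<le> (d + p) / (d + p - 1) - 1" using d1 p by (intro ln_le_minus_one) auto
      also have "\<dots> = 1 / (d + p - 1)" using d1 p by (simp add: field_simps)
      also have "\<dots> \<le> 1 / d" using d1 p by (simp add: frac_le)
      finally show ?thesis using d1 p by (simp add: ln_div)
    qed
    have "(d - 1) / 2 * (ln (d + p) - ln d) \<le> (d - 1) / 2 * (p / d)"
      using a1 d1 by (intro mult_left_mono) auto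
    moreover have "(p/2) * (ln (d + p) - ln (d + p - 1)) \<le> (p/2) * (1 / d)"
      using a2 p by (intro mult_left_mono) auto
    moreover have "(p/2) * (1/d) + (d - 1) / 2 * (p / d) = p / 2"
      using d1 by (simp add: field_simps)
    moreover have "(p/2) * (ln (d + p) - 1) + (d - 1) / 2 * (ln (d + p) - ln d)
       = (p/2) * (ln (d + p) - ln (d + p - 1)) + (d - 1) / 2 * (ln (d + p) - ln d) - p/2 + (p / 2) * ln (d + p - 1)"
      by (simp add: algebra_simps)
    ultimately show ?thesis by linarith
  qed
  also have "\<dots> = ln (sqrt (d + p - 1) powr p)"
    using d1 p by (simp add: ln_powr ln_sqrt)
  finally have "ln ((p / 2 / (\<mu> * exp 1)) powr (p / 2) * (c / c ^ D)) \<le> ln (sqrt (d + p - 1) powr p)" .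
  moreover have "(p / 2 / (\<mu> * exp 1)) powr (p / 2) * (c / c ^ D) > 0"
    using cpos mu p by simp
  moreover have "sqrt (d + p - 1) powr p > 0" using d1 p by simp
  ultimately show ?thesis by (subst ln_le_cancel_iff[symmetric]) auto
qed



lemma dbl:
  fixes f1 f2 :: "real \<Rightarrow> ennreal" and g1 g2 :: "'b::euclidean_space \<Rightarrow> ennreal"
  assumes [measurable]: "f1 \<in> borel_measurable borel" "f2 \<in> borel_measurable borel"
    "g1 \<in> borel_measurable borel" "g2 \<in> borel_measurable borel"
  shows "(\<integral>\<^sup>+t. \<integral>\<^sup>+v. c1 * (f1 t * g1 v) + c2 * (f2 t * g2 v) \<partial>lborel \<partial>lborel)
    = c1 * (integral\<^sup>N lborel f1 * integral\<^sup>N lborel g1) + c2 * (integral\<^sup>N lborel f2 * integral\<^sup>N lborel g2)"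
proof -
  have "(\<integral>\<^sup>+t. \<integral>\<^sup>+v. c1 * (f1 t * g1 v) + c2 * (f2 t * g2 v) \<partial>lborel \<partial>lborel)
     = (\<integral>\<^sup>+t. c1 * f1 t * integral\<^sup>N lborel g1 + c2 * f2 t * integral\<^sup>N lborel g2 \<partial>lborel)"
    by (intro nn_integral_cong) (simp add: nn_integral_add nn_integral_cmult mult.assoc)
  also have "\<dots> = c1 * (integral\<^sup>N lborel f1 * integral\<^sup>N lborel g1) + c2 * (integral\<^sup>N lborel f2 * integral\<^sup>N lborel g2)"
    by (simp add: nn_integral_add nn_integral_cmult nn_integral_multc mult.assoc)
  finally show ?thesis .
qed

lemma prodint:
  fixes f :: "real \<Rightarrow> ennreal" and g :: "'b::euclidean_space \<Rightarrow> ennreal"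
  assumes [measurable]: "f \<in> borel_measurable borel" "g \<in> borel_measurable borel"
  shows "(\<integral>\<^sup>+t. \<integral>\<^sup>+v. f t * g v \<partial>lborel \<partial>lborel) = integral\<^sup>N lborel f * integral\<^sup>N lborel g"
  by (simp add: nn_integral_cmult nn_integral_multc)

lemma scale:
  fixes f :: "'a::euclidean_space \<Rightarrow> ennreal" and c :: real
  assumes [measurable]: "f \<in> borel_measurable borel" and c: "c > 0"
  shows "(\<integral>\<^sup>+x. f (c *\<^sub>R x) \<partial>lborel) = ennreal (1 / c ^ DIM('a)) * integral\<^sup>N lborel f"
proof -
  have eq: "(lborel::'a measure) = density (distr (lborel::'a measure) borel (\<lambda>x. c *\<^sub>R x)) (\<lambda>_. \<bar>c\<bar>^DIM('a))"
  proof -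
    have c0: "c \<noteq> 0" using c by simp
    show ?thesis by (rule lborel_affine[of c "0::'a", OF c0, unfolded add_0_left])
  qed
  have "integral\<^sup>N lborel f = integral\<^sup>N (density (distr lborel borel (\<lambda>x. c *\<^sub>R x)) (\<lambda>_. \<bar>c\<bar>^DIM('a))) f"
    by (subst (1) eq) (rule refl)
  also have "\<dots> = (\<integral>\<^sup>+x. ennreal (c ^ DIM('a)) * f (c *\<^sub>R x) \<partial>lborel)"
    using c by (simp add: nn_integral_density nn_integral_distr)
  also have "\<dots> = ennreal (c ^ DIM('a)) * (\<integral>\<^sup>+x. f (c *\<^sub>R x) \<partial>lborel)"
    by (simp add: nn_integral_cmult)
  finally have "integral\<^sup>N lborel f = ennreal (c ^ DIM('a)) * (\<integral>\<^sup>+x. f (c *\<^sub>R x) \<partial>lborel)" .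
  then have "ennreal (1 / c ^ DIM('a)) * integral\<^sup>N lborel f = (ennreal (1 / c ^ DIM('a)) * ennreal (c ^ DIM('a))) * (\<integral>\<^sup>+x. f (c *\<^sub>R x) \<partial>lborel)"
    by (simp add: mult.assoc)
  also have "ennreal (1 / c ^ DIM('a)) * ennreal (c ^ DIM('a)) = 1"
    using c by (simp add: ennreal_mult[symmetric])
  finally show ?thesis by simp
qed

lemma symL:
  fixes \<phi> :: "real \<Rightarrow> ennreal" and \<alpha> :: real
  assumes [measurable]: "\<phi> \<in> borel_measurable borel" and a: "\<alpha> > 0"
  shows "(\<integral>\<^sup>+t. ennreal (indicator {t. \<alpha> \<le> \<bar>t\<bar>} t) * \<phi> (\<bar>t\<bar> - \<alpha>) \<partial>lborel)
    = 2 * (\<integral>\<^sup>+u. ennreal (indicator {0..} u) * \<phi> u \<partial>lborel)"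
proof -
  have "(\<integral>\<^sup>+t. ennreal (indicator {t. \<alpha> \<le> \<bar>t\<bar>} t) * \<phi> (\<bar>t\<bar> - \<alpha>) \<partial>lborel)
      = (\<integral>\<^sup>+t. ennreal (indicator {\<alpha>..} t) * \<phi> (\<bar>t\<bar> - \<alpha>) + ennreal (indicator {..-\<alpha>} t) * \<phi> (\<bar>t\<bar> - \<alpha>) \<partial>lborel)"
    using a by (intro nn_integral_cong) (auto simp: indicator_def distrib_right)
  also have "\<dots> = (\<integral>\<^sup>+t. ennreal (indicator {\<alpha>..} t) * \<phi> (\<bar>t\<bar> - \<alpha>) \<partial>lborel) + (\<integral>\<^sup>+t. ennreal (indicator {..-\<alpha>} t) * \<phi> (\<bar>t\<bar> - \<alpha>) \<partial>lborel)"
    by (rule nn_integral_add) measurable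
  also have "(\<integral>\<^sup>+t. ennreal (indicator {\<alpha>..} t) * \<phi> (\<bar>t\<bar> - \<alpha>) \<partial>lborel) = (\<integral>\<^sup>+u. ennreal (indicator {0..} u) * \<phi> u \<partial>lborel)"
    using a by (subst nn_integral_real_affine[where c=1 and t=\<alpha>]) (auto intro!: nn_integral_cong simp: indicator_def)
  also have "(\<integral>\<^sup>+t. ennreal (indicator {..-\<alpha>} t) * \<phi> (\<bar>t\<bar> - \<alpha>) \<partial>lborel) = (\<integral>\<^sup>+u. ennreal (indicator {0..} u) * \<phi> u \<partial>lborel)"
    using a by (subst nn_integral_real_affine[where c="-1" and t="-\<alpha>"]) (auto intro!: nn_integral_cong simp: indicator_def)
  finally show ?thesis by (simp add: mult_2)
qed

lemma Z1:
  "(\<integral>\<^sup>+t. ennreal (exp (- t\<^sup>2 / 2)) \<partial>lborel) = ennreal (sqrt (2 * pi))"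
proof -
  have "(\<integral>\<^sup>+t. ennreal (std_normal_density t) \<partial>lborel) = 1"
    by (subst nn_integral_eq_integral) auto
  moreover have "\<And>t. ennreal (exp (- t\<^sup>2 / 2)) = ennreal (sqrt (2 * pi)) * ennreal (std_normal_density t)"
    by (simp add: std_normal_density_def ennreal_mult[symmetric])
  ultimately show ?thesis by (simp add: nn_integral_cmult)
qed

lemma Zd:
  "(\<integral>\<^sup>+v. ennreal (exp (- (norm v)\<^sup>2 / 2)) \<partial>(lborel :: 'a::euclidean_space measure)) = ennreal (sqrt (2 * pi) ^ DIM('a))"
proof -
  have "\<And>v::'a. ennreal (exp (- (norm v)\<^sup>2 / 2)) = (\<Prod>b\<in>Basis. ennreal (exp (- (v \<bullet> b)\<^sup>2 / 2)))"
  proof -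
    fix v :: 'a
    have "(norm v)\<^sup>2 = (\<Sum>b\<in>Basis. (v \<bullet> b)\<^sup>2)"
      unfolding power2_norm_eq_inner by (subst euclidean_inner) (simp add: power2_eq_square)
    then have "exp (- (norm v)\<^sup>2 / 2) = (\<Prod>b\<in>Basis. exp (- (v \<bullet> b)\<^sup>2 / 2))"
      by (simp add: exp_sum[symmetric] sum_divide_distrib sum_negf)
    then show "ennreal (exp (- (norm v)\<^sup>2 / 2)) = (\<Prod>b\<in>Basis. ennreal (exp (- (v \<bullet> b)\<^sup>2 / 2)))"
      by (simp add: prod_ennreal)
  qed
  then have "(\<integral>\<^sup>+v. ennreal (exp (- (norm v)\<^sup>2 / 2)) \<partial>(lborel :: 'a measure))
     = (\<integral>\<^sup>+v. (\<Prod>b\<in>Basis. ennreal (exp (- (v \<bullet> b)\<^sup>2 / 2))) \<partial>(lborel :: 'a measure))"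
    by (intro nn_integral_cong) simp
  also have "\<dots> = (\<Prod>b\<in>(Basis::'a set). (\<integral>\<^sup>+t. ennreal (exp (- t\<^sup>2 / 2)) \<partial>lborel))"
    by (rule nn_integral_lborel_prod) auto
  finally show ?thesis using Z1 by (simp add: ennreal_power)
qed

lemma cheb:
  fixes f g w :: "real \<Rightarrow> real"
  assumes [measurable]: "f \<in> borel_measurable borel" "g \<in> borel_measurable borel" "w \<in> borel_measurable borel"
    and nn: "\<And>t. f t \<ge> 0" "\<And>t. g t \<ge> 0" "\<And>t. w t \<ge> 0"
    and anti: "\<And>u v. (f u - f v) * (g u - g v) \<le> 0"
  shows "(\<integral>\<^sup>+t. ennreal (f t * g t * w t) \<partial>lborel) * (\<integral>\<^sup>+t. ennreal (w t) \<partial>lborel)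
    \<le> (\<integral>\<^sup>+t. ennreal (f t * w t) \<partial>lborel) * (\<integral>\<^sup>+t. ennreal (g t * w t) \<partial>lborel)"
proof -
  let ?A = "\<integral>\<^sup>+t. ennreal (f t * g t * w t) \<partial>lborel"
  let ?Z = "\<integral>\<^sup>+t. ennreal (w t) \<partial>lborel"
  let ?B = "\<integral>\<^sup>+t. ennreal (f t * w t) \<partial>lborel"
  let ?C = "\<integral>\<^sup>+t. ennreal (g t * w t) \<partial>lborel"
  have pw: "1 * (ennreal (f u * g u * w u) * ennreal (w v)) + 1 * (ennreal (w u) * ennreal (f v * g v * w v))
      \<le> 1 * (ennreal (f u * w u) * ennreal (g v * w v)) + 1 * (ennreal (g u * w u) * ennreal (f v * w v))" for u v
  proof -
    have "w u * w v * ((f u - f v) * (g u - g v)) \<le> 0"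
      using mult_nonneg_nonpos[OF mult_nonneg_nonneg[OF nn(3)[of u] nn(3)[of v]] anti[of u v]] .
    then have "f u * g u * w u * w v + w u * (f v * g v * w v) \<le> f u * w u * (g v * w v) + g u * w u * (f v * w v)"
      by (simp add: algebra_simps)
    then have "ennreal (f u * g u * w u * w v + w u * (f v * g v * w v)) \<le> ennreal (f u * w u * (g v * w v) + g u * w u * (f v * w v))"
      by (rule ennreal_leI)
    then show ?thesis using nn
      by (simp add: ennreal_mult[symmetric] ennreal_plus[symmetric] mult_nonneg_nonneg del: ennreal_plus)
  qed
  have "(\<integral>\<^sup>+u. \<integral>\<^sup>+v. 1 * (ennreal (f u * g u * w u) * ennreal (w v)) + 1 * (ennreal (w u) * ennreal (f v * g v * w v)) \<partial>lborel \<partial>lborel)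
     \<le> (\<integral>\<^sup>+u. \<integral>\<^sup>+v. 1 * (ennreal (f u * w u) * ennreal (g v * w v)) + 1 * (ennreal (g u * w u) * ennreal (f v * w v)) \<partial>lborel \<partial>lborel)"
    by (intro nn_integral_mono pw)
  also have "\<dots> = 1 * (?B * ?C) + 1 * (?C * ?B)"
    by (rule dbl) measurable
  finally have "1 * (?A * ?Z) + 1 * (?Z * ?A) \<le> 1 * (?B * ?C) + 1 * (?C * ?B)"
    by (subst (asm) dbl) measurable
  then have "2 * (?A * ?Z) \<le> 2 * (?B * ?C)"
    by (simp add: mult_2 mult.commute)
  then show ?thesis
    by (subst (asm) ennreal_mult_le_mult_iff) auto
qed



lemma pw1d:
  fixes \<alpha> p t :: real
  assumes a: "\<alpha> > 0" and p: "p \<ge> 1" and t: "\<alpha> \<le> \<bar>t\<bar>"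
  defines "r \<equiv> sqrt (2 * p)"
  defines "K \<equiv> (p / 2 / (1 / 4 * exp 1)) powr (p / 2)"
  shows "\<bar>t\<bar> powr p * exp (- (\<bar>t\<bar> - \<alpha>)\<^sup>2 / 2)
    \<le> (\<alpha> + r) powr (p - 1) * \<alpha> * exp (- (\<bar>t\<bar> - \<alpha>)\<^sup>2 / 2)
      + (\<alpha> + r) powr (p - 1) * K / r powr (p - 1) * exp (- (\<bar>t\<bar> - \<alpha>)\<^sup>2 / 4)"
proof -
  have r: "r > 0" using p by (simp add: r_def)
  let ?z = "\<bar>t\<bar> - \<alpha>"
  have z: "?z \<ge> 0" using t by simp
  have "\<bar>t\<bar> powr p = (\<alpha> + ?z) powr p" by simp
  also have "\<dots> \<le> (\<alpha> + r) powr (p - 1) * (\<alpha> powr p / \<alpha> powr (p - 1) + ?z powr p / r powr (p - 1))"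
    by (rule mink[OF a r _ z p]) (use a in simp)
  also have "\<alpha> powr p / \<alpha> powr (p - 1) = \<alpha>" using a by (simp add: powr_diff)
  finally have m: "\<bar>t\<bar> powr p \<le> (\<alpha> + r) powr (p - 1) * (\<alpha> + ?z powr p / r powr (p - 1))" .
  have "?z powr p = (?z\<^sup>2) powr (p / 2)"
    using z sqrt_powr[of "?z\<^sup>2" p] by simp
  also have "\<dots> \<le> K * exp (1/4 * ?z\<^sup>2)"
    unfolding K_def by (rule expbound) (use p in auto)
  finally have e: "?z powr p \<le> K * exp (1/4 * ?z\<^sup>2)" .
  have K: "K \<ge> 0" by (simp add: K_def)
  have "\<bar>t\<bar> powr p * exp (- ?z\<^sup>2 / 2) \<le> (\<alpha> + r) powr (p - 1) * (\<alpha> + ?z powr p / r powr (p - 1)) * exp (- ?z\<^sup>2 / 2)"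
    by (rule mult_right_mono[OF m]) simp
  also have "\<dots> \<le> (\<alpha> + r) powr (p - 1) * (\<alpha> + K * exp (1/4 * ?z\<^sup>2) / r powr (p - 1)) * exp (- ?z\<^sup>2 / 2)"
    using e r a by (intro mult_right_mono mult_left_mono add_left_mono divide_right_mono) auto
  also have "\<dots> = (\<alpha> + r) powr (p - 1) * \<alpha> * exp (- ?z\<^sup>2 / 2)
      + (\<alpha> + r) powr (p - 1) * K / r powr (p - 1) * (exp (1/4 * ?z\<^sup>2) * exp (- ?z\<^sup>2 / 2))"
    by (simp add: algebra_simps)
  also have "exp (1/4 * ?z\<^sup>2) * exp (- ?z\<^sup>2 / 2) = exp (- ?z\<^sup>2 / 4)"
    unfolding mult_exp_exp by (simp add: field_simps)
  finally show ?thesis .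
qed



lemma H0_bounds:
  "(\<integral>\<^sup>+u. ennreal (indicator {0..} u) * ennreal (exp (- u\<^sup>2 / 2)) \<partial>lborel) \<le> ennreal (sqrt (2 * pi))"
  "(\<integral>\<^sup>+u. ennreal (indicator {0..} u) * ennreal (exp (- u\<^sup>2 / 2)) \<partial>lborel) \<ge> ennreal (exp (- 1 / 2))"
proof -
  show "(\<integral>\<^sup>+u. ennreal (indicator {0..} u) * ennreal (exp (- u\<^sup>2 / 2)) \<partial>lborel) \<le> ennreal (sqrt (2 * pi))"
    unfolding Z1[symmetric] by (intro nn_integral_mono) (auto simp: indicator_def)
  have "ennreal (exp (- 1 / 2)) = (\<integral>\<^sup>+u. ennreal (exp (- 1 / 2)) * indicator {0..1::real} u \<partial>lborel)"
    by (subst nn_integral_cmult_indicator) auto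
  also have "\<dots> \<le> (\<integral>\<^sup>+u. ennreal (indicator {0..} u) * ennreal (exp (- u\<^sup>2 / 2)) \<partial>lborel)"
  proof (intro nn_integral_mono)
    fix u :: real
    show "ennreal (exp (- 1 / 2)) * indicator {0..1} u \<le> ennreal (indicator {0..} u) * ennreal (exp (- u\<^sup>2 / 2))"
    proof (cases "u \<in> {0..1}")
      case True
      then have "u\<^sup>2 \<le> 1" by (auto intro: power_le_one)
      then have "exp (- 1 / 2) \<le> exp (- u\<^sup>2 / 2)" by simp
      then show ?thesis using True by (simp add: ennreal_leI)
    qed simp
  qed
  finally show "(\<integral>\<^sup>+u. ennreal (indicator {0..} u) * ennreal (exp (- u\<^sup>2 / 2)) \<partial>lborel) \<ge> ennreal (exp (- 1 / 2))" .
qed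

lemma tail1d:
  fixes \<alpha> p :: real
  assumes a: "\<alpha> > 0" and p: "p \<ge> 1"
  shows "(\<integral>\<^sup>+t. ennreal (exp (- t\<^sup>2 / 2) * indicator {t. \<alpha> \<le> \<bar>t\<bar>} t * \<bar>t\<bar> powr p) \<partial>lborel)
    \<le> ennreal ((\<alpha> + sqrt (2 * p)) powr p) * (\<integral>\<^sup>+t. ennreal (exp (- t\<^sup>2 / 2) * indicator {t. \<alpha> \<le> \<bar>t\<bar>} t) \<partial>lborel)"
proof -
  define r where "r = sqrt (2 * p)"
  define K where "K = (p / 2 / (1 / 4 * exp 1)) powr (p / 2)"
  define ac where "ac = \<alpha> + r"
  define w where "w t = indicator {t. \<alpha> \<le> \<bar>t\<bar>} t * exp (- (\<bar>t\<bar> - \<alpha>)\<^sup>2 / 2)" for t :: real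
  define g where "g t = exp (- \<alpha> * \<bar>t\<bar>)" for t :: real
  define f where "f t = \<bar>t\<bar> powr p" for t :: real
  have r: "r > 0" using p by (simp add: r_def)
  have ac: "ac > 0" using a r by (simp add: ac_def)
  have Kn: "K \<ge> 0" by (simp add: K_def)
  have [measurable]: "w \<in> borel_measurable borel" "g \<in> borel_measurable borel" "f \<in> borel_measurable borel"
    unfolding w_def g_def f_def by measurable
  have nn: "\<And>t. f t \<ge> 0" "\<And>t. g t \<ge> 0" "\<And>t. w t \<ge> 0" by (auto simp: f_def g_def w_def)
  have ident: "exp (- t\<^sup>2 / 2) = exp (\<alpha>\<^sup>2 / 2) * (g t * exp (- (\<bar>t\<bar> - \<alpha>)\<^sup>2 / 2))" for t
  proof -
    have "- t\<^sup>2 / 2 = \<alpha>\<^sup>2 / 2 + (- \<alpha> * \<bar>t\<bar> + - (\<bar>t\<bar> - \<alpha>)\<^sup>2 / 2)"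
      by (simp add: power2_eq_square abs_mult_self_eq field_simps)
    then show ?thesis unfolding g_def mult_exp_exp by (rule arg_cong[where f=exp])
  qed
  let ?S = "{t::real. \<alpha> \<le> \<bar>t\<bar>}"
  let ?E = "ennreal (exp (\<alpha>\<^sup>2 / 2))"
  let ?A = "\<integral>\<^sup>+t. ennreal (f t * g t * w t) \<partial>lborel"
  let ?Z = "\<integral>\<^sup>+t. ennreal (w t) \<partial>lborel"
  let ?B = "\<integral>\<^sup>+t. ennreal (f t * w t) \<partial>lborel"
  let ?C = "\<integral>\<^sup>+t. ennreal (g t * w t) \<partial>lborel"
  let ?H0 = "\<integral>\<^sup>+u. ennreal (indicator {0..} u) * ennreal (exp (- u\<^sup>2 / 2)) \<partial>lborel"
  have LA: "(\<integral>\<^sup>+t. ennreal (exp (- t\<^sup>2 / 2) * indicator ?S t * \<bar>t\<bar> powr p) \<partial>lborel) = ?E * ?A"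
  proof -
    have "exp (- t\<^sup>2 / 2) * indicator ?S t * \<bar>t\<bar> powr p = exp (\<alpha>\<^sup>2 / 2) * (f t * g t * w t)" for t
      by (subst ident[of t]) (simp add: f_def w_def algebra_simps)
    then show ?thesis using nn
      by (simp add: nn_integral_cmult[symmetric] ennreal_mult[symmetric] mult_nonneg_nonneg del: ennreal_mult)
  qed
  have LC: "(\<integral>\<^sup>+t. ennreal (exp (- t\<^sup>2 / 2) * indicator ?S t) \<partial>lborel) = ?E * ?C"
  proof -
    have "exp (- t\<^sup>2 / 2) * indicator ?S t = exp (\<alpha>\<^sup>2 / 2) * (g t * w t)" for t
      by (subst ident[of t]) (simp add: w_def algebra_simps)
    then show ?thesis using nn
      by (simp add: nn_integral_cmult[symmetric] ennreal_mult[symmetric] mult_nonneg_nonneg del: ennreal_mult)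
  qed
  have anti: "(f u - f v) * (g u - g v) \<le> 0" for u v
  proof (cases "\<bar>u\<bar> \<le> \<bar>v\<bar>")
    case True
    have "f u \<le> f v" unfolding f_def using True p by (intro powr_mono2) auto
    moreover have "g v \<le> g u" unfolding g_def using True a by (simp add: mult_left_mono)
    ultimately show ?thesis by (intro mult_nonpos_nonneg) auto
  next
    case False
    have "f v \<le> f u" unfolding f_def using False p by (intro powr_mono2) auto
    moreover have "g u \<le> g v" unfolding g_def using False a by (simp add: mult_left_mono)
    ultimately show ?thesis by (intro mult_nonneg_nonpos) auto
  qed
  have ch: "?A * ?Z \<le> ?B * ?C"
    by (rule cheb) (use nn anti in auto)
  define c1 where "c1 = ac powr (p - 1) * \<alpha>"
  define c2 where "c2 = ac powr (p - 1) * K / r powr (p - 1)"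
  have c12: "c1 \<ge> 0" "c2 \<ge> 0" using a ac r Kn by (auto simp: c1_def c2_def)
  have Zeq: "?Z = 2 * ?H0"
  proof -
    have "?Z = (\<integral>\<^sup>+t. ennreal (indicator ?S t) * ennreal (exp (- (\<bar>t\<bar> - \<alpha>)\<^sup>2 / 2)) \<partial>lborel)"
      by (intro nn_integral_cong) (simp add: w_def ennreal_mult)
    also have "\<dots> = 2 * ?H0"
      by (rule symL[where \<phi>="\<lambda>u. ennreal (exp (- u\<^sup>2 / 2))"]) (use a in auto)
    finally show ?thesis .
  qed
  have Jeq: "(\<integral>\<^sup>+t. ennreal (indicator ?S t * exp (- (\<bar>t\<bar> - \<alpha>)\<^sup>2 / 4)) \<partial>lborel) = ennreal (sqrt 2) * ?Z"
  proof -
    have "(\<integral>\<^sup>+t. ennreal (indicator ?S t * exp (- (\<bar>t\<bar> - \<alpha>)\<^sup>2 / 4)) \<partial>lborel)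
        = (\<integral>\<^sup>+t. ennreal (indicator ?S t) * ennreal (exp (- (\<bar>t\<bar> - \<alpha>)\<^sup>2 / 4)) \<partial>lborel)"
      by (intro nn_integral_cong) (simp add: ennreal_mult)
    also have "\<dots> = 2 * (\<integral>\<^sup>+u. ennreal (indicator {0..} u) * ennreal (exp (- u\<^sup>2 / 4)) \<partial>lborel)"
      by (rule symL[where \<phi>="\<lambda>u. ennreal (exp (- u\<^sup>2 / 4))"]) (use a in auto)
    also have "(\<integral>\<^sup>+u. ennreal (indicator {0..} u) * ennreal (exp (- u\<^sup>2 / 4)) \<partial>lborel)
       = (\<integral>\<^sup>+u. ennreal (indicator {0..} ((1 / sqrt 2) *\<^sub>R u)) * ennreal (exp (- ((1 / sqrt 2) *\<^sub>R u)\<^sup>2 / 2)) \<partial>lborel)"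
      by (intro nn_integral_cong) (simp add: power_divide indicator_def zero_le_divide_iff)
    also have "\<dots> = ennreal (1 / (1 / sqrt 2) ^ DIM(real)) * ?H0"
      by (rule scale[where f="\<lambda>u. ennreal (indicator {0..} u) * ennreal (exp (- u\<^sup>2 / 2))"]) auto
    finally show ?thesis unfolding Zeq by (simp add: mult.commute mult.left_commute)
  qed
  have Bb: "?B \<le> ennreal (ac powr p) * ?Z"
  proof -
    have "?B \<le> (\<integral>\<^sup>+t. ennreal c1 * ennreal (w t) + ennreal c2 * ennreal (indicator ?S t * exp (- (\<bar>t\<bar> - \<alpha>)\<^sup>2 / 4)) \<partial>lborel)"
    proof (intro nn_integral_mono)
      fix t :: real
      have "f t * w t \<le> c1 * w t + c2 * (indicator ?S t * exp (- (\<bar>t\<bar> - \<alpha>)\<^sup>2 / 4))"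
      proof (cases "t \<in> ?S")
        case True
        then show ?thesis using pw1d[OF a p, of t] unfolding f_def w_def c1_def c2_def ac_def r_def K_def
          by (simp add: algebra_simps)
      qed (simp add: w_def f_def)
      then have "ennreal (f t * w t) \<le> ennreal (c1 * w t + c2 * (indicator ?S t * exp (- (\<bar>t\<bar> - \<alpha>)\<^sup>2 / 4)))"
        by (rule ennreal_leI)
      then show "ennreal (f t * w t) \<le> ennreal c1 * ennreal (w t) + ennreal c2 * ennreal (indicator ?S t * exp (- (\<bar>t\<bar> - \<alpha>)\<^sup>2 / 4))"
        using c12 nn by (simp add: ennreal_plus[symmetric] ennreal_mult[symmetric] del: ennreal_plus)
    qed
    also have "\<dots> = ennreal c1 * ?Z + ennreal c2 * (\<integral>\<^sup>+t. ennreal (indicator ?S t * exp (- (\<bar>t\<bar> - \<alpha>)\<^sup>2 / 4)) \<partial>lborel)"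
      by (simp add: nn_integral_add nn_integral_cmult)
    also have "\<dots> = ennreal (c1 + c2 * sqrt 2) * ?Z"
      unfolding Jeq using c12 by (simp add: ennreal_plus ennreal_mult distrib_right mult.assoc)
    also have "\<dots> \<le> ennreal (ac powr p) * ?Z"
    proof (intro mult_right_mono ennreal_leI)
      have "K * sqrt 2 \<le> r powr p" using const1[OF p] by (simp add: K_def r_def)
      then have "K * sqrt 2 / r powr (p - 1) \<le> r powr p / r powr (p - 1)"
        using r by (intro divide_right_mono) auto
      also have "r powr p / r powr (p - 1) = r" using r by (simp add: powr_diff)
      finally have "c2 * sqrt 2 \<le> ac powr (p - 1) * r"
        using ac unfolding c2_def by (simp add: mult_left_mono divide_simps mult.assoc)
      then have "c1 + c2 * sqrt 2 \<le> ac powr (p - 1) * (\<alpha> + r)" unfolding c1_def by (simp add: distrib_left)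
      also have "\<dots> = ac powr p" using ac by (simp add: ac_def[symmetric] powr_diff)
      finally show "c1 + c2 * sqrt 2 \<le> ac powr p" .
    qed simp
    finally show ?thesis .
  qed
  have Zfin: "?Z \<noteq> 0" "?Z \<noteq> top"
  proof -
    have "?H0 \<noteq> 0" using H0_bounds(2) by (auto simp: order.antisym_conv2)
    moreover have "?H0 \<noteq> top" using H0_bounds(1) by (auto simp: top_unique)
    ultimately show "?Z \<noteq> 0" "?Z \<noteq> top" unfolding Zeq by (auto simp: ennreal_mult_eq_top_iff)
  qed
  have "?Z * ?A \<le> ?Z * (ennreal (ac powr p) * ?C)"
  proof -
    have "?Z * ?A = ?A * ?Z" by (simp add: mult.commute)
    also have "\<dots> \<le> ?B * ?C" by (rule ch)
    also have "\<dots> \<le> (ennreal (ac powr p) * ?Z) * ?C" by (intro mult_right_mono Bb) auto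
    also have "\<dots> = ?Z * (ennreal (ac powr p) * ?C)" by (simp add: mult.commute mult.left_commute)
    finally show ?thesis .
  qed
  then have AC: "?A \<le> ennreal (ac powr p) * ?C"
    using Zfin by (subst (asm) ennreal_mult_le_mult_iff) auto
  show ?thesis
    unfolding LA LC ac_def[symmetric] r_def[symmetric]
    using mult_left_mono[OF AC, of ?E] by (simp add: mult.commute mult.left_commute)
qed



lemma Wbound:
  fixes s :: "'a::euclidean_space" and p :: real
  assumes s: "norm s = 1" and p: "p \<ge> 1"
  shows "(\<integral>\<^sup>+v. ennreal (exp (- (norm v)\<^sup>2 / 2)) * ennreal (((norm v)\<^sup>2 - (v \<bullet> s)\<^sup>2) powr (p / 2)) \<partial>lborel)
    \<le> ennreal (sqrt (real DIM('a) + p - 1) powr p) * (\<integral>\<^sup>+v. ennreal (exp (- (norm v)\<^sup>2 / 2)) \<partial>(lborel::'a measure))"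
proof -
  define D where "D = DIM('a)"
  define d where "d = real D"
  define \<mu> where "\<mu> = p / (2 * (d + p))"
  define c where "c = sqrt (1 - 2 * \<mu>)"
  define K where "K = (p / 2 / (\<mu> * exp 1)) powr (p / 2)"
  have D1: "D \<ge> 1" by (simp add: D_def DIM_positive Suc_le_eq)
  have d1: "d \<ge> 1" using D1 by (simp add: d_def)
  have mu: "\<mu> > 0" using p d1 by (simp add: \<mu>_def)
  have omu: "1 - 2 * \<mu> = d / (d + p)" using p d1 by (simp add: \<mu>_def field_simps)
  have cpos: "c > 0" using omu d1 p by (simp add: c_def)
  have c2: "c\<^sup>2 = 1 - 2 * \<mu>" using omu d1 p by (simp add: c_def)
  have Kn: "K \<ge> 0" by (simp add: K_def)
  let ?y = "\<lambda>v::'a. (norm v)\<^sup>2 - (v \<bullet> s)\<^sup>2"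
  have y: "?y v \<ge> 0" for v
  proof -
    have "\<bar>v \<bullet> s\<bar> \<le> norm v * norm s" by (rule Cauchy_Schwarz_ineq2)
    then have "\<bar>v \<bullet> s\<bar> \<le> norm v" using s by simp
    then have "(v \<bullet> s)\<^sup>2 \<le> (norm v)\<^sup>2" by (metis abs_le_square_iff abs_norm_cancel)
    then show ?thesis by simp
  qed
  let ?Zd = "\<integral>\<^sup>+v. ennreal (exp (- (norm v)\<^sup>2 / 2)) \<partial>(lborel::'a measure)"
  let ?Z1 = "\<integral>\<^sup>+t. ennreal (exp (- t\<^sup>2 / 2)) \<partial>(lborel::real measure)"
  let ?E' = "\<integral>\<^sup>+v. ennreal (exp (- (norm v)\<^sup>2 / 2)) * ennreal (exp (\<mu> * ?y v)) \<partial>(lborel::'a measure)"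
  have step1: "(\<integral>\<^sup>+v. ennreal (exp (- (norm v)\<^sup>2 / 2)) * ennreal (?y v powr (p / 2)) \<partial>(lborel::'a measure)) \<le> ennreal K * ?E'"
  proof -
    have "(\<integral>\<^sup>+v. ennreal (exp (- (norm v)\<^sup>2 / 2)) * ennreal (?y v powr (p / 2)) \<partial>lborel)
        \<le> (\<integral>\<^sup>+v. ennreal K * (ennreal (exp (- (norm v)\<^sup>2 / 2)) * ennreal (exp (\<mu> * ?y v))) \<partial>lborel)"
    proof (intro nn_integral_mono)
      fix v :: 'a
      have "?y v powr (p / 2) \<le> K * exp (\<mu> * ?y v)"
        unfolding K_def by (rule expbound) (use y p mu in auto)
      then have "exp (- (norm v)\<^sup>2 / 2) * ?y v powr (p / 2) \<le> exp (- (norm v)\<^sup>2 / 2) * (K * exp (\<mu> * ?y v))"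
        by (intro mult_left_mono) auto
      then show "ennreal (exp (- (norm v)\<^sup>2 / 2)) * ennreal (?y v powr (p / 2)) \<le> ennreal K * (ennreal (exp (- (norm v)\<^sup>2 / 2)) * ennreal (exp (\<mu> * ?y v)))"
        using Kn by (simp add: ennreal_mult[symmetric] ennreal_leI mult.left_commute del: ennreal_mult)
    qed
    also have "\<dots> = ennreal K * ?E'" by (rule nn_integral_cmult) measurable
    finally show ?thesis .
  qed
  have gs: "?Z1 * (\<integral>\<^sup>+v. ennreal (exp (- (norm v)\<^sup>2 / 2)) * ennreal (exp (\<mu> * (norm v)\<^sup>2)) \<partial>(lborel::'a measure))
     = (\<integral>\<^sup>+t. \<integral>\<^sup>+v. ennreal (exp (- t\<^sup>2 / 2) * exp (- (norm v)\<^sup>2 / 2)) * ennreal (exp (\<mu> * (norm (v + (t - v \<bullet> s) *\<^sub>R s))\<^sup>2)) \<partial>lborel \<partial>lborel)"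
    by (rule gswap[OF s]) measurable
  also have "\<dots> = (\<integral>\<^sup>+t. \<integral>\<^sup>+v. ennreal (exp (- t\<^sup>2 / 2) * exp (\<mu> * t\<^sup>2)) * ennreal (exp (- (norm v)\<^sup>2 / 2) * exp (\<mu> * ?y v)) \<partial>lborel \<partial>lborel)"
  proof (intro nn_integral_cong)
    fix t :: real and v :: 'a
    have "exp (- t\<^sup>2 / 2) * exp (- (norm v)\<^sup>2 / 2) * exp (\<mu> * (norm (v + (t - v \<bullet> s) *\<^sub>R s))\<^sup>2)
        = exp (- t\<^sup>2 / 2) * exp (\<mu> * t\<^sup>2) * (exp (- (norm v)\<^sup>2 / 2) * exp (\<mu> * ?y v))"
      unfolding norm_shift[OF s] mult_exp_exp by (simp add: algebra_simps)
    then show "ennreal (exp (- t\<^sup>2 / 2) * exp (- (norm v)\<^sup>2 / 2)) * ennreal (exp (\<mu> * (norm (v + (t - v \<bullet> s) *\<^sub>R s))\<^sup>2))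
      = ennreal (exp (- t\<^sup>2 / 2) * exp (\<mu> * t\<^sup>2)) * ennreal (exp (- (norm v)\<^sup>2 / 2) * exp (\<mu> * ?y v))"
      by (simp add: ennreal_mult[symmetric] del: ennreal_mult)
  qed
  also have "\<dots> = (\<integral>\<^sup>+t. ennreal (exp (- t\<^sup>2 / 2) * exp (\<mu> * t\<^sup>2)) \<partial>lborel) * (\<integral>\<^sup>+v. ennreal (exp (- (norm v)\<^sup>2 / 2) * exp (\<mu> * ?y v)) \<partial>lborel)"
    by (rule prodint) measurable
  finally have gs2: "?Z1 * (\<integral>\<^sup>+v. ennreal (exp (- (norm v)\<^sup>2 / 2)) * ennreal (exp (\<mu> * (norm v)\<^sup>2)) \<partial>(lborel::'a measure))
      = (\<integral>\<^sup>+t. ennreal (exp (- t\<^sup>2 / 2) * exp (\<mu> * t\<^sup>2)) \<partial>lborel) * ?E'"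
    by (simp add: ennreal_mult)
  have sc_d: "(\<integral>\<^sup>+v. ennreal (exp (- (norm v)\<^sup>2 / 2)) * ennreal (exp (\<mu> * (norm v)\<^sup>2)) \<partial>(lborel::'a measure)) = ennreal (1 / c ^ D) * ?Zd"
  proof -
    have "(\<integral>\<^sup>+v. ennreal (exp (- (norm v)\<^sup>2 / 2)) * ennreal (exp (\<mu> * (norm v)\<^sup>2)) \<partial>(lborel::'a measure))
        = (\<integral>\<^sup>+v. ennreal (exp (- (norm (c *\<^sub>R v))\<^sup>2 / 2)) \<partial>(lborel::'a measure))"
    proof (intro nn_integral_cong)
      fix v :: 'a
      have "exp (- (norm v)\<^sup>2 / 2) * exp (\<mu> * (norm v)\<^sup>2) = exp (- (norm (c *\<^sub>R v))\<^sup>2 / 2)"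
        using cpos unfolding mult_exp_exp by (simp add: power_mult_distrib c2 algebra_simps)
      then show "ennreal (exp (- (norm v)\<^sup>2 / 2)) * ennreal (exp (\<mu> * (norm v)\<^sup>2)) = ennreal (exp (- (norm (c *\<^sub>R v))\<^sup>2 / 2))"
        by (simp add: ennreal_mult[symmetric] del: ennreal_mult)
    qed
    also have "\<dots> = ennreal (1 / c ^ D) * ?Zd"
      unfolding D_def by (rule scale[where f="\<lambda>v. ennreal (exp (- (norm v)\<^sup>2 / 2))"]) (use cpos in auto)
    finally show ?thesis .
  qed
  have sc_1: "(\<integral>\<^sup>+t. ennreal (exp (- t\<^sup>2 / 2) * exp (\<mu> * t\<^sup>2)) \<partial>lborel) = ennreal (1 / c) * ?Z1"
  proof -
    have "(\<integral>\<^sup>+t. ennreal (exp (- t\<^sup>2 / 2) * exp (\<mu> * t\<^sup>2)) \<partial>lborel)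
        = (\<integral>\<^sup>+t. ennreal (exp (- (c *\<^sub>R t)\<^sup>2 / 2)) \<partial>(lborel::real measure))"
    proof (intro nn_integral_cong)
      fix t :: real
      show "ennreal (exp (- t\<^sup>2 / 2) * exp (\<mu> * t\<^sup>2)) = ennreal (exp (- (c *\<^sub>R t)\<^sup>2 / 2))"
        using cpos unfolding mult_exp_exp by (simp add: power_mult_distrib c2 algebra_simps)
    qed
    also have "\<dots> = ennreal (1 / c ^ DIM(real)) * ?Z1"
      by (rule scale[where f="\<lambda>t. ennreal (exp (- t\<^sup>2 / 2))"]) (use cpos in auto)
    finally show ?thesis by simp
  qed
  have Z1v: "?Z1 = ennreal (sqrt (2 * pi))" by (rule Z1)
  have "?Z1 * (ennreal (1 / c ^ D) * ?Zd) = (ennreal (1 / c) * ?Z1) * ?E'"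
    using gs2 unfolding sc_d sc_1 .
  also have "\<dots> = ?Z1 * (ennreal (1 / c) * ?E')" by (simp only: mult.assoc mult.commute mult.left_commute)
  finally have "?Z1 * (ennreal (1 / c ^ D) * ?Zd) = ?Z1 * (ennreal (1 / c) * ?E')" .
  then have eqZ: "ennreal (sqrt (2 * pi)) * (ennreal (1 / c ^ D) * ?Zd) = ennreal (sqrt (2 * pi)) * (ennreal (1 / c) * ?E')"
    unfolding Z1v .
  have zz: "ennreal (sqrt (2 * pi)) \<noteq> 0" "ennreal (sqrt (2 * pi)) \<noteq> top" by auto
  have "ennreal (1 / c ^ D) * ?Zd \<le> ennreal (1 / c) * ?E'"
    using eqZ ennreal_mult_le_mult_iff[OF zz, of "ennreal (1 / c ^ D) * ?Zd" "ennreal (1 / c) * ?E'"] by simp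
  moreover have "ennreal (1 / c) * ?E' \<le> ennreal (1 / c ^ D) * ?Zd"
    using eqZ ennreal_mult_le_mult_iff[OF zz, of "ennreal (1 / c) * ?E'" "ennreal (1 / c ^ D) * ?Zd"] by simp
  ultimately have "ennreal (1 / c ^ D) * ?Zd = ennreal (1 / c) * ?E'" by (rule order.antisym)
  then have "ennreal c * (ennreal (1 / c ^ D) * ?Zd) = (ennreal c * ennreal (1 / c)) * ?E'"
    by (simp add: mult.assoc)
  also have "ennreal c * ennreal (1 / c) = 1" using cpos by (simp add: ennreal_mult[symmetric] del: ennreal_mult)
  finally have E0: "ennreal c * (ennreal (1 / c ^ D) * ?Zd) = ?E'" by simp
  have cc: "ennreal (c / c ^ D) = ennreal c * ennreal (1 / c ^ D)"
    using cpos by (simp add: ennreal_mult[symmetric])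
  have E': "?E' = ennreal (c / c ^ D) * ?Zd"
    unfolding E0[symmetric] cc by (simp only: mult.assoc)
  have "(\<integral>\<^sup>+v. ennreal (exp (- (norm v)\<^sup>2 / 2)) * ennreal (?y v powr (p / 2)) \<partial>lborel) \<le> ennreal K * (ennreal (c / c ^ D) * ?Zd)"
    using step1 unfolding E' .
  also have "\<dots> = ennreal (K * (c / c ^ D)) * ?Zd"
  proof -
    have "ennreal (K * (c / c ^ D)) = ennreal K * ennreal (c / c ^ D)"
      using Kn cpos by (intro ennreal_mult) auto
    then show ?thesis by (simp only: mult.assoc)
  qed
  also have "\<dots> \<le> ennreal (sqrt (real DIM('a) + p - 1) powr p) * ?Zd"
  proof (intro mult_right_mono ennreal_leI)
    show "K * (c / c ^ D) \<le> sqrt (real DIM('a) + p - 1) powr p"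
      using const2[OF p D1] unfolding K_def c_def \<mu>_def d_def D_def by simp
  qed simp
  finally show ?thesis .
qed



lemma core:
  fixes s :: "'a::euclidean_space" and \<alpha> p :: real
  assumes a: "\<alpha> > 0" and p: "p \<ge> 1" and s: "norm s = 1"
  shows "(\<integral>\<^sup>+v. ennreal (exp (- (norm v)\<^sup>2 / 2)) * ennreal (indicator {v. \<alpha> \<le> \<bar>v \<bullet> s\<bar>} v * norm v powr p) \<partial>lborel)
    \<le> ennreal ((\<alpha> + sqrt (2 * p) + sqrt (real DIM('a) + p - 1)) powr p)
       * (\<integral>\<^sup>+v. ennreal (exp (- (norm v)\<^sup>2 / 2)) * ennreal (indicator {v. \<alpha> \<le> \<bar>v \<bullet> s\<bar>} v) \<partial>lborel)"
proof -
  define A where "A = {v::'a. \<alpha> \<le> \<bar>v \<bullet> s\<bar>}"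
  define S where "S = {t::real. \<alpha> \<le> \<bar>t\<bar>}"
  define ac where "ac = \<alpha> + sqrt (2 * p)"
  define bc where "bc = sqrt (real DIM('a) + p - 1)"
  define \<kappa> where "\<kappa> = (ac + bc) powr (p - 1)"
  define c1 where "c1 = \<kappa> / ac powr (p - 1)"
  define c2 where "c2 = \<kappa> / bc powr (p - 1)"
  have ac: "ac > 0" using a p unfolding ac_def by (intro add_pos_nonneg) auto
  have d1: "real DIM('a) \<ge> 1" by (simp add: DIM_positive Suc_le_eq)
  have bc: "bc > 0" unfolding bc_def using d1 p by (intro real_sqrt_gt_zero) linarith
  have c12: "c1 \<ge> 0" "c2 \<ge> 0" by (simp_all add: c1_def c2_def \<kappa>_def)
  have ss: "s \<bullet> s = 1" using s by (simp add: norm_eq_sqrt_inner)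
  let ?y = "\<lambda>v::'a. (norm v)\<^sup>2 - (v \<bullet> s)\<^sup>2"
  have y: "?y v \<ge> 0" for v
  proof -
    have "\<bar>v \<bullet> s\<bar> \<le> norm v * norm s" by (rule Cauchy_Schwarz_ineq2)
    then have "\<bar>v \<bullet> s\<bar> \<le> norm v" using s by simp
    then have "(v \<bullet> s)\<^sup>2 \<le> (norm v)\<^sup>2" by (metis abs_le_square_iff abs_norm_cancel)
    then show ?thesis by simp
  qed
  let ?Z1 = "\<integral>\<^sup>+t. ennreal (exp (- t\<^sup>2 / 2)) \<partial>(lborel::real measure)"
  let ?Zd = "\<integral>\<^sup>+v. ennreal (exp (- (norm v)\<^sup>2 / 2)) \<partial>(lborel::'a measure)"
  let ?Tp = "\<integral>\<^sup>+t. ennreal (exp (- t\<^sup>2 / 2) * indicator S t * \<bar>t\<bar> powr p) \<partial>(lborel::real measure)"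
  let ?T0 = "\<integral>\<^sup>+t. ennreal (exp (- t\<^sup>2 / 2) * indicator S t) \<partial>(lborel::real measure)"
  let ?W = "\<integral>\<^sup>+v. ennreal (exp (- (norm v)\<^sup>2 / 2)) * ennreal (?y v powr (p / 2)) \<partial>(lborel::'a measure)"
  let ?I = "\<integral>\<^sup>+v. ennreal (exp (- (norm v)\<^sup>2 / 2)) * ennreal (indicator A v * norm v powr p) \<partial>(lborel::'a measure)"
  let ?Q = "\<integral>\<^sup>+v. ennreal (exp (- (norm v)\<^sup>2 / 2)) * ennreal (indicator A v) \<partial>(lborel::'a measure)"
  have shift_s: "(v + (t - v \<bullet> s) *\<^sub>R s) \<bullet> s = t" for v :: 'a and t
    using ss by (simp add: inner_add_left algebra_simps)
  have A_shift: "indicator A (v + (t - v \<bullet> s) *\<^sub>R s) = (indicator S t :: real)" for v t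
    by (simp add: A_def S_def indicator_def shift_s)
  have [measurable]: "A \<in> sets borel" "S \<in> sets borel" unfolding A_def S_def by measurable
  have "?Z1 * ?I = (\<integral>\<^sup>+t. \<integral>\<^sup>+v. ennreal (exp (- t\<^sup>2 / 2) * exp (- (norm v)\<^sup>2 / 2))
      * ennreal (indicator A (v + (t - v \<bullet> s) *\<^sub>R s) * norm (v + (t - v \<bullet> s) *\<^sub>R s) powr p) \<partial>lborel \<partial>lborel)"
    by (rule gswap[OF s]) measurable
  also have "\<dots> \<le> (\<integral>\<^sup>+t. \<integral>\<^sup>+v. ennreal c1 * (ennreal (exp (- t\<^sup>2 / 2) * indicator S t * \<bar>t\<bar> powr p) * ennreal (exp (- (norm v)\<^sup>2 / 2)))
      + ennreal c2 * (ennreal (exp (- t\<^sup>2 / 2) * indicator S t) * (ennreal (exp (- (norm v)\<^sup>2 / 2)) * ennreal (?y v powr (p / 2)))) \<partial>lborel \<partial>lborel)"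
  proof (intro nn_integral_mono)
    fix t :: real and v :: 'a
    let ?v' = "v + (t - v \<bullet> s) *\<^sub>R s"
    have nv: "(norm ?v')\<^sup>2 = ?y v + t\<^sup>2" by (simp add: norm_shift[OF s])
    have real: "exp (- t\<^sup>2 / 2) * exp (- (norm v)\<^sup>2 / 2) * (indicator S t * norm ?v' powr p)
      \<le> c1 * (exp (- t\<^sup>2 / 2) * indicator S t * \<bar>t\<bar> powr p * exp (- (norm v)\<^sup>2 / 2))
       + c2 * (exp (- t\<^sup>2 / 2) * indicator S t * (exp (- (norm v)\<^sup>2 / 2) * ?y v powr (p / 2)))"
    proof (cases "t \<in> S")
      case False then show ?thesis using c12 by simp
    next
      case True
      have "norm ?v' = sqrt (?y v + t\<^sup>2)" using nv by (metis norm_ge_zero real_sqrt_unique)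
      also have "\<dots> \<le> \<bar>t\<bar> + sqrt (?y v)"
      proof -
        have "?y v + t\<^sup>2 \<le> (\<bar>t\<bar> + sqrt (?y v))\<^sup>2"
          using y[of v] by (simp add: power2_sum)
        then have "sqrt (?y v + t\<^sup>2) \<le> sqrt ((\<bar>t\<bar> + sqrt (?y v))\<^sup>2)" by (rule real_sqrt_le_mono)
        moreover have "\<bar>\<bar>t\<bar> + sqrt (?y v)\<bar> = \<bar>t\<bar> + sqrt (?y v)" using y[of v] by (intro abs_of_nonneg) auto
        ultimately show ?thesis by simp
      qed
      finally have n1: "norm ?v' \<le> \<bar>t\<bar> + sqrt (?y v)" .
      have "norm ?v' powr p \<le> (\<bar>t\<bar> + sqrt (?y v)) powr p"
        using n1 p by (intro powr_mono2) auto
      also have "\<dots> \<le> (ac + bc) powr (p - 1) * (\<bar>t\<bar> powr p / ac powr (p - 1) + sqrt (?y v) powr p / bc powr (p - 1))"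
        by (rule mink[OF ac bc _ _ p]) (use y[of v] in auto)
      also have "\<dots> = c1 * \<bar>t\<bar> powr p + c2 * ?y v powr (p / 2)"
        using y[of v] by (simp add: c1_def c2_def \<kappa>_def sqrt_powr algebra_simps)
      finally have n2: "norm ?v' powr p \<le> c1 * \<bar>t\<bar> powr p + c2 * ?y v powr (p / 2)" .
      have "exp (- t\<^sup>2 / 2) * exp (- (norm v)\<^sup>2 / 2) * norm ?v' powr p
          \<le> exp (- t\<^sup>2 / 2) * exp (- (norm v)\<^sup>2 / 2) * (c1 * \<bar>t\<bar> powr p + c2 * ?y v powr (p / 2))"
        by (rule mult_left_mono[OF n2]) simp
      then show ?thesis using True by (simp add: algebra_simps)
    qed
    have "ennreal (exp (- t\<^sup>2 / 2) * exp (- (norm v)\<^sup>2 / 2)) * ennreal (indicator A ?v' * norm ?v' powr p)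
        = ennreal (exp (- t\<^sup>2 / 2) * exp (- (norm v)\<^sup>2 / 2) * (indicator S t * norm ?v' powr p))"
      unfolding A_shift by (simp add: ennreal_mult[symmetric] del: ennreal_mult)
    also have "\<dots> \<le> ennreal (c1 * (exp (- t\<^sup>2 / 2) * indicator S t * \<bar>t\<bar> powr p * exp (- (norm v)\<^sup>2 / 2))
       + c2 * (exp (- t\<^sup>2 / 2) * indicator S t * (exp (- (norm v)\<^sup>2 / 2) * ?y v powr (p / 2))))"
      by (rule ennreal_leI[OF real])
    also have "\<dots> = ennreal c1 * (ennreal (exp (- t\<^sup>2 / 2) * indicator S t * \<bar>t\<bar> powr p) * ennreal (exp (- (norm v)\<^sup>2 / 2)))
      + ennreal c2 * (ennreal (exp (- t\<^sup>2 / 2) * indicator S t) * (ennreal (exp (- (norm v)\<^sup>2 / 2)) * ennreal (?y v powr (p / 2))))"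
      using c12 y[of v] by (simp add: ennreal_plus ennreal_mult)
    finally show "ennreal (exp (- t\<^sup>2 / 2) * exp (- (norm v)\<^sup>2 / 2)) * ennreal (indicator A ?v' * norm ?v' powr p)
      \<le> ennreal c1 * (ennreal (exp (- t\<^sup>2 / 2) * indicator S t * \<bar>t\<bar> powr p) * ennreal (exp (- (norm v)\<^sup>2 / 2)))
      + ennreal c2 * (ennreal (exp (- t\<^sup>2 / 2) * indicator S t) * (ennreal (exp (- (norm v)\<^sup>2 / 2)) * ennreal (?y v powr (p / 2))))" .
  qed
  also have "\<dots> = ennreal c1 * (?Tp * ?Zd) + ennreal c2 * (?T0 * ?W)"
    by (rule dbl) measurable
  finally have G1: "?Z1 * ?I \<le> ennreal c1 * (?Tp * ?Zd) + ennreal c2 * (?T0 * ?W)" .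
  have "?Z1 * ?Q = (\<integral>\<^sup>+t. \<integral>\<^sup>+v. ennreal (exp (- t\<^sup>2 / 2) * exp (- (norm v)\<^sup>2 / 2))
      * ennreal (indicator A (v + (t - v \<bullet> s) *\<^sub>R s)) \<partial>lborel \<partial>lborel)"
    by (rule gswap[OF s]) measurable
  also have "\<dots> = (\<integral>\<^sup>+t. \<integral>\<^sup>+v. ennreal (exp (- t\<^sup>2 / 2) * indicator S t) * ennreal (exp (- (norm v)\<^sup>2 / 2)) \<partial>(lborel::'a measure) \<partial>lborel)"
    unfolding A_shift by (intro nn_integral_cong) (simp add: ennreal_mult[symmetric] mult_ac del: ennreal_mult)
  also have "\<dots> = ?T0 * ?Zd" by (rule prodint) measurable
  finally have G2: "?Z1 * ?Q = ?T0 * ?Zd" .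
  have Tb: "?Tp \<le> ennreal (ac powr p) * ?T0"
    unfolding S_def ac_def by (rule tail1d[OF a p])
  have Wb: "?W \<le> ennreal (bc powr p) * ?Zd"
    unfolding bc_def by (rule Wbound[OF s p])
  have "ennreal c1 * (?Tp * ?Zd) + ennreal c2 * (?T0 * ?W)
      \<le> ennreal c1 * ((ennreal (ac powr p) * ?T0) * ?Zd) + ennreal c2 * (?T0 * (ennreal (bc powr p) * ?Zd))"
    by (intro add_mono mult_left_mono mult_right_mono Tb Wb) auto
  also have "\<dots> = ennreal (c1 * ac powr p + c2 * bc powr p) * (?T0 * ?Zd)"
    using c12 by (simp add: ennreal_plus ennreal_mult distrib_right mult.assoc mult.left_commute)
  also have "c1 * ac powr p + c2 * bc powr p = (ac + bc) powr p"
  proof -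
    have "c1 * ac powr p = \<kappa> * ac" using ac by (simp add: c1_def powr_diff)
    moreover have "c2 * bc powr p = \<kappa> * bc" using bc by (simp add: c2_def powr_diff)
    moreover have "\<kappa> * (ac + bc) = (ac + bc) powr p" using ac bc by (simp add: \<kappa>_def powr_diff)
    ultimately show ?thesis by (simp add: distrib_left)
  qed
  finally have "?Z1 * ?I \<le> ennreal ((ac + bc) powr p) * (?T0 * ?Zd)" using G1 by simp
  also have "\<dots> = ?Z1 * (ennreal ((ac + bc) powr p) * ?Q)"
    unfolding G2[symmetric] by (simp only: mult.assoc mult.commute mult.left_commute)
  finally have fin: "?Z1 * ?I \<le> ?Z1 * (ennreal ((ac + bc) powr p) * ?Q)" .
  have zz: "?Z1 \<noteq> 0" "?Z1 \<noteq> top" unfolding Z1 by auto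
  have "?I \<le> ennreal ((ac + bc) powr p) * ?Q"
    using fin ennreal_mult_le_mult_iff[OF zz] by simp
  then show ?thesis unfolding A_def ac_def bc_def .
qed

theorem lemmaA10:
  fixes s :: "'a::euclidean_space" and \<alpha> p :: real
  assumes "\<alpha> > 0" and "p \<ge> 1" and "norm s = 1"
  shows "(cond_exp_event std_gaussian (\<lambda>v. norm v powr p) {v. \<bar>v \<bullet> s\<bar> \<ge> \<alpha>}) powr (1 / p)
           \<le> 2 * \<alpha> + sqrt (2 * p) + sqrt (real DIM('a) + p - 1)"
proof -
  note a = assms(1) and p = assms(2) and s = assms(3)
  define A where "A = {v::'a. \<alpha> \<le> \<bar>v \<bullet> s\<bar>}"
  define R where "R = \<alpha> + sqrt (2 * p) + sqrt (real DIM('a) + p - 1)"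
  define K0 where "K0 = (2 * pi) powr (- real DIM('a) / 2)"
  define SG where "SG = (std_gaussian :: 'a measure)"
  have K0: "K0 > 0" by (simp add: K0_def)
  have d1: "real DIM('a) \<ge> 1" by (simp add: DIM_positive Suc_le_eq)
  have Rpos: "R > 0"
  proof -
    have "sqrt (2 * p) \<ge> 0" "sqrt (real DIM('a) + p - 1) \<ge> 0" using p d1 by auto
    then show ?thesis using a unfolding R_def by linarith
  qed
  have [measurable]: "A \<in> sets borel" unfolding A_def by measurable
  have SGd: "SG = density lborel (\<lambda>x. ennreal (K0 * exp (- (norm x)\<^sup>2 / 2)))"
    by (simp add: SG_def std_gaussian_def K0_def)
  let ?I = "\<integral>\<^sup>+v. ennreal (exp (- (norm v)\<^sup>2 / 2)) * ennreal (indicator A v * norm v powr p) \<partial>(lborel::'a measure)"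
  let ?Q = "\<integral>\<^sup>+v. ennreal (exp (- (norm v)\<^sup>2 / 2)) * ennreal (indicator A v) \<partial>(lborel::'a measure)"
  have core': "?I \<le> ennreal (R powr p) * ?Q"
    unfolding A_def R_def by (rule core[OF a p s])
  have N: "(\<integral>\<^sup>+x. ennreal (indicator A x * norm x powr p) \<partial>SG) = ennreal K0 * ?I"
    unfolding SGd using K0
    by (subst nn_integral_density) (auto simp: ennreal_mult nn_integral_cmult[symmetric] mult.assoc intro!: nn_integral_cong)
  have EM: "emeasure SG A = ennreal K0 * ?Q"
    unfolding SGd using K0
    by (subst emeasure_density) (auto simp: ennreal_mult nn_integral_cmult[symmetric] mult.assoc ennreal_indicator intro!: nn_integral_cong)
  have Qfin: "?Q \<noteq> top"
  proof -
    have "?Q \<le> (\<integral>\<^sup>+v. ennreal (exp (- (norm v)\<^sup>2 / 2)) \<partial>(lborel::'a measure))"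
      by (intro nn_integral_mono) (auto simp: indicator_def)
    also have "\<dots> = ennreal (sqrt (2 * pi) ^ DIM('a))" by (rule Zd)
    finally show ?thesis by (auto simp: top_unique)
  qed
  have EMfin: "emeasure SG A \<noteq> top" unfolding EM using Qfin by (simp add: ennreal_mult_eq_top_iff)
  define m where "m = measure SG A"
  have m: "emeasure SG A = ennreal m" "m \<ge> 0" using EMfin by (auto simp: m_def emeasure_eq_ennreal_measure)
  have "(\<integral>\<^sup>+x. ennreal (indicator A x * norm x powr p) \<partial>SG) \<le> ennreal (R powr p) * emeasure SG A"
  proof -
    have "ennreal K0 * ?I \<le> ennreal K0 * (ennreal (R powr p) * ?Q)" by (rule mult_left_mono[OF core']) simp
    then show ?thesis unfolding N EM by (simp add: mult.commute mult.left_commute)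
  qed
  also have "\<dots> = ennreal (R powr p * m)" using m by (simp add: ennreal_mult)
  finally have Nb: "(\<integral>\<^sup>+x. ennreal (indicator A x * norm x powr p) \<partial>SG) \<le> ennreal (R powr p * m)" .
  have Bb: "(\<integral>x. indicator A x * norm x powr p \<partial>SG) \<le> R powr p * m"
    by (rule integral_real_bounded) (use m Nb in auto)
  have Bn: "(\<integral>x. indicator A x * norm x powr p \<partial>SG) \<ge> 0"
    by (intro integral_nonneg_AE AE_I2) auto
  define ce where "ce = cond_exp_event SG (\<lambda>v. norm v powr p) A"
  have ce_eq: "ce = (\<integral>x. indicator A x * norm x powr p \<partial>SG) / m"
    by (simp add: ce_def cond_exp_event_def m_def)
  have ce0: "ce \<ge> 0" using Bn m by (simp add: ce_eq)
  have ceb: "ce \<le> R powr p"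
  proof (cases "m = 0")
    case True then show ?thesis by (simp add: ce_eq)
  next
    case False
    then have "m > 0" using m by simp
    then show ?thesis using Bb by (simp add: ce_eq divide_le_eq mult.commute)
  qed
  have "ce powr (1 / p) \<le> (R powr p) powr (1 / p)"
    using ce0 ceb p by (intro powr_mono2) auto
  also have "\<dots> = R" using Rpos p by (simp add: powr_powr)
  also have "\<dots> \<le> 2 * \<alpha> + sqrt (2 * p) + sqrt (real DIM('a) + p - 1)" using a by (simp add: R_def)
  finally show ?thesis unfolding ce_def SG_def A_def by simp
qed


end
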